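(* For every integer $n\ge 6$, the set $\mathcal{MUC}(n,3)$ is nonempty, and $\ell(n,3)\le \frac{7n}{3}-4$.
   Context: A bi-hypergraph $\mathcal H=(V,E)$ consists of a finite vertex set $V$ and a set $E$ of subsets of $V$, called edges, with no edge contained in another. It is $r$-uniform if every edge has exactly $r$ elements. A mapping $f:V\to\mathbb N$ is a proper coloring of $\mathcal H$ if $1<|f(e)|<|e|$ for every $e\in E$, where $f(e)=\{f(v):v\in e\}$. $\mathcal H$ is colorable if it has a proper coloring, and uncolorable otherwise. A subhypergraph of $\mathcal H$ is a bi-hypergraph $(V',E')$ with $V'\subseteq V$, $E'\subseteq E$. $\mathcal H$ is minimal uncolorable if it is uncolorable but every proper subhypergraph of it is colorable. $\mathcal{MUC}(n,r)$ is the set of minimal uncolorable $r$-uniform bi-hypergraphs with exactly $n$ vertices, and $\ell(n,r)$ is the minimum number of edges of a member of $\mathcal{MUC}(n,r)$ (and $\ell(n,r)=\infty$ if $\mathcal{MUC}(n,r)=\emptyset$). *)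

theory Defs
  imports Main "HOL-Library.Extended_Nat"
begin

definition bihypergraph :: "'a set \<Rightarrow> 'a set set \<Rightarrow> bool" where
  "bihypergraph V E \<longleftrightarrow> finite V \<and> (\<forall>e\<in>E. e \<subseteq> V)
     \<and> (\<forall>e\<in>E. \<forall>e'\<in>E. e \<subseteq> e' \<longrightarrow> e = e')"

definition uniform :: "nat \<Rightarrow> 'a set set \<Rightarrow> bool" where
  "uniform r E \<longleftrightarrow> (\<forall>e\<in>E. card e = r)"

definition proper_coloring :: "'a set set \<Rightarrow> ('a \<Rightarrow> nat) \<Rightarrow> bool" where
  "proper_coloring E f \<longleftrightarrow> (\<forall>e\<in>E. 1 < card (f ` e) \<and> card (f ` e) < card e)"

definition colorable :: "'a set set \<Rightarrow> bool" where
  "colorable E \<longleftrightarrow> (\<exists>f. proper_coloring E f)"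

definition subhypergraph :: "'a set \<Rightarrow> 'a set set \<Rightarrow> 'a set \<Rightarrow> 'a set set \<Rightarrow> bool" where
  "subhypergraph V' E' V E \<longleftrightarrow> bihypergraph V' E' \<and> V' \<subseteq> V \<and> E' \<subseteq> E"

definition minimal_uncolorable :: "'a set \<Rightarrow> 'a set set \<Rightarrow> bool" where
  "minimal_uncolorable V E \<longleftrightarrow> bihypergraph V E \<and> \<not> colorable E \<and>
     (\<forall>V' E'. subhypergraph V' E' V E \<and> (V', E') \<noteq> (V, E) \<longrightarrow> colorable E')"

text \<open>MUC(n,r), with vertices drawn from nat (all notions are isomorphism invariant).\<close>
definition MUC :: "nat \<Rightarrow> nat \<Rightarrow> (nat set \<times> nat set set) set" where
  "MUC n r = {(V, E). minimal_uncolorable V E \<and> uniform r E \<and> card V = n}"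

definition ell :: "nat \<Rightarrow> nat \<Rightarrow> enat" where
  "ell n r = (if MUC n r = {} then \<infinity>
              else enat (LEAST k. \<exists>H\<in>MUC n r. card (snd H) = k))"

end

theory Submission
  imports Defs
begin

definition good3 :: "('a \<Rightarrow> nat) \<Rightarrow> 'a \<Rightarrow> 'a \<Rightarrow> 'a \<Rightarrow> bool" where
  "good3 f a b c \<longleftrightarrow> (f a = f b \<and> f b \<noteq> f c) \<or> (f a = f c \<and> f a \<noteq> f b) \<or> (f b = f c \<and> f a \<noteq> f b)"

lemma card_img3:
  assumes "a \<noteq> b" "a \<noteq> c" "b \<noteq> c"
  shows "(1 < card (f ` {a,b,c}) \<and> card (f ` {a,b,c}) < card {a,b,c}) \<longleftrightarrow> good3 f a b c"
  using assms by (auto simp: good3_def card_insert_if)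

lemma colorable_mono: "colorable E \<Longrightarrow> E' \<subseteq> E \<Longrightarrow> colorable E'"
  unfolding colorable_def proper_coloring_def by blast

lemma exists_muc:
  fixes E :: "nat set set"
  assumes fin: "finite E" and sub: "\<And>e. e \<in> E \<Longrightarrow> e \<subseteq> {..<n}"
    and three: "\<And>e. e \<in> E \<Longrightarrow> card e = 3"
    and unc: "\<not> colorable E" and vc: "\<And>v. v < n \<Longrightarrow> colorable {e\<in>E. v \<notin> e}"
  shows "\<exists>E'. ({..<n}, E') \<in> MUC n 3 \<and> card E' \<le> card E"
proof -
  let ?P = "\<lambda>k. \<exists>E'. E' \<subseteq> E \<and> \<not> colorable E' \<and> card E' = k"
  have P0: "?P (card E)" using unc by blast
  define k where "k = (LEAST k. ?P k)"
  have Pk: "?P k" unfolding k_def by (rule LeastI[of ?P, OF P0])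
  have kmin: "\<And>j. ?P j \<Longrightarrow> k \<le> j" unfolding k_def by (rule Least_le)
  obtain E' where E': "E' \<subseteq> E" "\<not> colorable E'" "card E' = k" using Pk by blast
  have fin': "finite E'" using fin E'(1) finite_subset by blast
  have minE: "colorable E''" if "E'' \<subset> E'" for E''
  proof (rule ccontr)
    assume "\<not> colorable E''"
    then have "?P (card E'')" using that E'(1) by blast
    then have "k \<le> card E''" by (rule kmin)
    moreover have "card E'' < card E'" using that fin' psubset_card_mono by blast
    ultimately show False using E'(3) by simp
  qed
  have cover: "\<Union>E' = {..<n}"
  proof
    show "\<Union>E' \<subseteq> {..<n}" using sub E'(1) by blast
    show "{..<n} \<subseteq> \<Union>E'"
    proof
      fix v assume v: "v \<in> {..<n}"
      show "v \<in> \<Union>E'"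
      proof (rule ccontr)
        assume "v \<notin> \<Union>E'"
        then have "E' \<subseteq> {e\<in>E. v \<notin> e}" using E'(1) by blast
        then have "colorable E'" using vc[of v] v colorable_mono by auto
        then show False using E'(2) by blast
      qed
    qed
  qed
  have bh: "bihypergraph {..<n} E'"
    unfolding bihypergraph_def
  proof (intro conjI ballI impI)
    show "finite {..<n}" by simp
    fix e assume "e \<in> E'" then show "e \<subseteq> {..<n}" using sub E'(1) by blast
  next
    fix e e' assume e: "e \<in> E'" and e': "e' \<in> E'" and ss: "e \<subseteq> e'"
    have c: "card e = 3" "card e' = 3" using three e e' E'(1) by auto
    then have "finite e'" by (metis card.infinite zero_neq_numeral)
    then show "e = e'" using card_subset_eq[OF _ ss] c by simp
  qed
  have mu: "minimal_uncolorable {..<n} E'"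
    unfolding minimal_uncolorable_def
  proof (intro conjI allI impI)
    show "bihypergraph {..<n} E'" by (rule bh)
    show "\<not> colorable E'" by (rule E'(2))
    fix V'' E'' assume a: "subhypergraph V'' E'' {..<n} E' \<and> (V'', E'') \<noteq> ({..<n}, E')"
    then have s1: "bihypergraph V'' E''" "V'' \<subseteq> {..<n}" "E'' \<subseteq> E'"
      unfolding subhypergraph_def by auto
    show "colorable E''"
    proof (cases "E'' = E'")
      case True
      then have "\<Union>E' \<subseteq> V''" using s1(1) unfolding bihypergraph_def by blast
      then have "V'' = {..<n}" using s1(2) cover by blast
      then show ?thesis using a True by simp
    next
      case False
      then show ?thesis using s1(3) minE by blast
    qed
  qed
  have "({..<n}, E') \<in> MUC n 3"
    unfolding MUC_def uniform_def using mu three E'(1) by auto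
  moreover have "card E' \<le> card E" using E'(1) fin card_mono by blast
  ultimately show ?thesis by blast
qed

lemma ell_bound:
  assumes "(V, E') \<in> MUC n r"
  shows "MUC n r \<noteq> {} \<and> ell n r \<noteq> \<infinity> \<and> the_enat (ell n r) \<le> card E'"
proof -
  have ne: "MUC n r \<noteq> {}" using assms by blast
  have "(LEAST k. \<exists>H\<in>MUC n r. card (snd H) = k) \<le> card E'"
    by (rule Least_le) (use assms in force)
  then show ?thesis using ne unfolding ell_def by simp
qed

section \<open>Cyclic family\<close>

definition cyc1 :: "nat \<Rightarrow> nat \<Rightarrow> nat set" where
  "cyc1 n i = {i, Suc i mod n, (i+2) mod n}"
definition cyc2 :: "nat \<Rightarrow> nat \<Rightarrow> nat set" where
  "cyc2 n i = {i, Suc i mod n, (i+3) mod n}"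
definition CE :: "nat \<Rightarrow> nat set set" where
  "CE n = cyc1 n ` {..<n} \<union> cyc2 n ` {..<n}"
definition EE :: "nat \<Rightarrow> nat set set" where
  "EE n = (if odd n then CE n else insert {0,4,8} (CE n))"

lemma mod_neq:
  fixes i a b n :: nat
  assumes "a < b" "b < n"
  shows "(i + a) mod n \<noteq> (i + b) mod n"
proof
  assume h: "(i + a) mod n = (i + b) mod n"
  have "n dvd (i + b) - (i + a)"
    using h mod_eq_dvd_iff_nat[of "i+a" "i+b" n] assms by simp
  then have "n dvd b - a" by simp
  moreover have "0 < b - a" "b - a < n" using assms by auto
  ultimately show False using nat_dvd_not_less by blast
qed

lemma CE_finite: "finite (CE n)" unfolding CE_def by simp

lemma CE_card: "card (CE n) \<le> 2 * n"
proof -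
  have "card (CE n) \<le> card (cyc1 n ` {..<n}) + card (cyc2 n ` {..<n})"
    unfolding CE_def by (rule card_Un_le)
  also have "\<dots> \<le> n + n" using card_image_le[of "{..<n}"] by (intro add_mono) auto
  finally show ?thesis by simp
qed

lemma cyc1_simp: "i < n \<Longrightarrow> cyc1 n i = {i mod n, (i+1) mod n, (i+2) mod n}"
  unfolding cyc1_def by simp
lemma cyc2_simp: "i < n \<Longrightarrow> cyc2 n i = {i mod n, (i+1) mod n, (i+3) mod n}"
  unfolding cyc2_def by simp

lemma CE_edges:
  assumes "e \<in> CE n" "4 \<le> n"
  shows "e \<subseteq> {..<n} \<and> card e = 3"
proof -
  have n0: "0 < n" using assms by simp
  from assms(1) obtain i c where i: "i < n" "c = 2 \<or> c = 3" "e = {i mod n, (i+1) mod n, (i+c) mod n}"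
    unfolding CE_def using cyc1_simp cyc2_simp by fastforce
  have d: "(i+0) mod n \<noteq> (i+1) mod n" "(i+0) mod n \<noteq> (i+c) mod n" "(i+1) mod n \<noteq> (i+c) mod n"
    using mod_neq[of 0 1 n i] mod_neq[of 0 c n i] mod_neq[of 1 c n i] i(2) assms(2) by auto
  show ?thesis using i d n0 by auto
qed

section \<open>Sequence argument\<close>

locale seqc =
  fixes F :: "nat \<Rightarrow> nat"
  assumes H1: "\<And>i. good3 F i (Suc i) (Suc (Suc i))"
    and H2: "\<And>i. good3 F i (Suc i) (Suc (Suc (Suc i)))"
begin

lemma pairstep:
  assumes "F i = F (Suc i)"
  shows "F (Suc (Suc i)) = F (Suc (Suc (Suc i))) \<and> F (Suc (Suc i)) \<noteq> F i \<and> F (Suc (Suc (Suc (Suc i)))) = F i"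
  using H1[of i] H2[of i] H1[of "Suc i"] H2[of "Suc i"] H1[of "Suc (Suc i)"] assms
  unfolding good3_def by metis

lemma noteqstep:
  assumes "F i \<noteq> F (Suc i)" "F (Suc i) \<noteq> F (Suc (Suc i))"
  shows "F (Suc (Suc i)) = F i"
  using H1[of i] assms unfolding good3_def by metis

lemma pairs:
  assumes "F i = F (Suc i)"
  shows "F (i + 4*k) = F i \<and> F (i + 4*k + 1) = F i \<and> F (i + 4*k + 2) = F (i+2) \<and> F (i + 4*k + 3) = F (i+2)"
proof (induction k)
  case 0
  then show ?case using pairstep[OF assms] assms by (simp add: numeral_eq_Suc)
next
  case (Suc k)
  let ?j = "i + 4*k"
  have e0: "F ?j = F (Suc ?j)" using Suc by simp
  have e2: "F (Suc (Suc ?j)) = F (Suc (Suc (Suc ?j)))" using Suc by (simp add: numeral_eq_Suc)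
  have A: "F (Suc (Suc (Suc (Suc ?j)))) = F ?j" using pairstep[OF e0] by blast
  have B: "F (Suc (Suc (Suc (Suc ?j)))) = F (Suc (Suc (Suc (Suc (Suc ?j)))))
     \<and> F (Suc (Suc (Suc (Suc (Suc (Suc ?j)))))) = F (Suc (Suc ?j))" using pairstep[OF e2] by simp
  have e4: "F (Suc (Suc (Suc (Suc ?j)))) = F (Suc (Suc (Suc (Suc (Suc ?j)))))" using B by blast
  have C: "F (Suc (Suc (Suc (Suc (Suc (Suc ?j)))))) = F (Suc (Suc (Suc (Suc (Suc (Suc (Suc ?j)))))))"
    using pairstep[OF e4] by simp
  show ?case using Suc A B C by (simp add: numeral_eq_Suc algebra_simps)
qed

lemma pair_neq:
  assumes "F i = F (Suc i)"
  shows "F (i+2) \<noteq> F i"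
  using pairstep[OF assms] by (simp add: numeral_eq_Suc)

lemma period4:
  assumes "F i = F (Suc i)" "i \<le> j"
  shows "F (j + 4) = F j"
proof -
  obtain m where m: "j = i + m" using assms(2) le_Suc_ex by blast
  obtain k r where kr: "m = 4*k + r" "r < 4" by (metis div_mult_mod_eq mod_less_divisor zero_less_numeral mult.commute)
  have P1: "F (i + 4*k) = F i \<and> F (i + 4*k + 1) = F i \<and> F (i + 4*k + 2) = F (i+2) \<and> F (i + 4*k + 3) = F (i+2)"
    by (rule pairs[OF assms(1)])
  have P2: "F (i + 4*(k+1)) = F i \<and> F (i + 4*(k+1) + 1) = F i \<and> F (i + 4*(k+1) + 2) = F (i+2) \<and> F (i + 4*(k+1) + 3) = F (i+2)"
    by (rule pairs[OF assms(1)])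
  have "r = 0 \<or> r = 1 \<or> r = 2 \<or> r = 3" using kr(2) by auto
  then show ?thesis using P1 P2 m kr(1) by (auto simp: algebra_simps)
qed

lemma alt:
  assumes "\<And>i. F i \<noteq> F (Suc i)"
  shows "F (2*k) = F 0 \<and> F (2*k+1) = F 1"
proof (induction k)
  case 0 then show ?case by simp
next
  case (Suc k)
  have "F (Suc (Suc (2*k))) = F (2*k)" using noteqstep assms by blast
  moreover have "F (Suc (Suc (2*k+1))) = F (2*k+1)" using noteqstep assms by blast
  ultimately show ?case using Suc by simp
qed
end


lemma (in seqc) uncol:
  assumes per: "\<And>j. F (j + n) = F j" and n0: "0 < n"
    and X: "even n \<Longrightarrow> good3 F 0 4 8"
  shows False
proof -
  have perc: "F (j + n*c) = F j" for j c
  proof (induction c)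
    case 0 then show ?case by simp
  next
    case (Suc c)
    have "F (j + n * Suc c) = F ((j + n*c) + n)" by (simp add: algebra_simps)
    also have "\<dots> = F (j + n*c)" by (rule per)
    finally show ?case using Suc by simp
  qed
  show False
  proof (cases "\<exists>i. F i = F (Suc i)")
    case True
    then obtain i where i: "F i = F (Suc i)" by blast
    have ne: "F (i+2) \<noteq> F i" by (rule pair_neq[OF i])
    define k where "k = n div 4"
    have P: "F (i + 4*k) = F i \<and> F (i + 4*k + 1) = F i \<and> F (i + 4*k + 2) = F (i+2) \<and> F (i + 4*k + 3) = F (i+2)"
      by (rule pairs[OF i])
    have pi: "F (i + n) = F i" using per by simp
    have pi1: "F (i + 1 + n) = F i" using per[of "i+1"] i by simp
    have "n mod 4 = 0 \<or> n mod 4 = 1 \<or> n mod 4 = 2 \<or> n mod 4 = 3" by auto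
    moreover have nk: "n = 4*k + n mod 4" unfolding k_def by simp
    moreover {
      assume m: "n mod 4 = 0"
      define J where "J = n * (i+1)"
      have iJ: "i \<le> J" unfolding J_def using mult_le_mono1[of 1 n "i+1"] n0 by simp
      have a1: "F (J + 4) = F J" by (rule period4[OF i iJ])
      have a2: "F (J + 4 + 4) = F (J + 4)" by (rule period4[OF i]) (use iJ in simp)
      have b0: "F J = F 0" unfolding J_def using perc[of 0 "i+1"] by simp
      have eq4: "J + 4 = 4 + n*(i+1)" unfolding J_def by simp
      have b4: "F (J+4) = F 4" by (subst eq4) (rule perc)
      have eq8: "J + 4 + 4 = 8 + n*(i+1)" unfolding J_def by simp
      have b8: "F (J+4+4) = F 8" by (subst eq8) (rule perc)
      have "even n" using m by presburger
      then have "good3 F 0 4 8" by (rule X)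
      then have False using a1 a2 b0 b4 b8 unfolding good3_def by metis
    }
    moreover {
      assume m: "n mod 4 = 1"
      then have "i + 1 + n = i + 4*k + 2" using nk by simp
      then have False using pi1 P ne by metis
    }
    moreover {
      assume m: "n mod 4 = 2"
      then have "i + n = i + 4*k + 2" using nk by simp
      then have False using pi P ne by metis
    }
    moreover {
      assume m: "n mod 4 = 3"
      then have "i + n = i + 4*k + 3" using nk by simp
      then have False using pi P ne by metis
    }
    ultimately show False by auto
  next
    case False
    then have nq: "\<And>i. F i \<noteq> F (Suc i)" by blast
    show False
    proof (cases "even n")
      case True
      have "F 4 = F 0" using alt[OF nq, of 2] by simp
      moreover have "F 8 = F 0" using alt[OF nq, of 4] by simp
      moreover have "good3 F 0 4 8" using X True by blast
      ultimately show False unfolding good3_def by metis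
    next
      case False
      then obtain k where k: "n = 2*k+1" using oddE by blast
      have "F n = F 0" using per[of 0] by simp
      moreover have "F n = F 1" using alt[OF nq, of k] k by simp
      ultimately show False using nq[of 0] by simp
    qed
  qed
qed

lemma edge_good:
  assumes "proper_coloring E f" "{a,b,c} \<in> E" "a \<noteq> b" "a \<noteq> c" "b \<noteq> c"
  shows "good3 f a b c"
  using assms card_img3[of a b c f] unfolding proper_coloring_def by blast

lemma cyc_inst:
  assumes "4 \<le> n" "c = 2 \<or> c = 3"
  shows "{(i mod n) mod n, (Suc i mod n) mod n, (i + c) mod n} = {i mod n, Suc i mod n, (i+c) mod n}"
    and "i mod n \<noteq> Suc i mod n" "i mod n \<noteq> (i+c) mod n" "Suc i mod n \<noteq> (i+c) mod n"
  using mod_neq[of 0 1 n i] mod_neq[of 0 c n i] mod_neq[of 1 c n i] assms by auto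

lemma EE_uncol:
  assumes n: "9 \<le> n"
  shows "\<not> colorable (EE n)"
proof
  assume "colorable (EE n)"
  then obtain f where f: "proper_coloring (EE n) f" unfolding colorable_def by blast
  define F where "F i = f (i mod n)" for i
  have CEsub: "CE n \<subseteq> EE n" unfolding EE_def by auto
  have d: "i mod n \<noteq> Suc i mod n" "i mod n \<noteq> (i+c) mod n" "Suc i mod n \<noteq> (i+c) mod n"
    if "c = 2 \<or> c = 3" for i c
    using mod_neq[of 0 1 n i] mod_neq[of 0 c n i] mod_neq[of 1 c n i] that n by auto
  have mem: "{i mod n, Suc i mod n, (i+c) mod n} \<in> EE n" if "c = 2 \<or> c = 3" for i c
  proof -
    have im: "i mod n < n" using n by simp
    have "cyc1 (n) (i mod n) = {i mod n, Suc i mod n, (i+2) mod n}"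
      unfolding cyc1_def by (simp only: mod_Suc_eq mod_add_left_eq)
    moreover have "cyc2 (n) (i mod n) = {i mod n, Suc i mod n, (i+3) mod n}"
      unfolding cyc2_def by (simp only: mod_Suc_eq mod_add_left_eq)
    ultimately show ?thesis using that im CEsub unfolding CE_def by auto
  qed
  have g: "good3 F i (Suc i) (i + c)" if "c = 2 \<or> c = 3" for i c
  proof -
    have "good3 f (i mod n) (Suc i mod n) ((i+c) mod n)"
      using edge_good[OF f mem[OF that]] d[OF that] by blast
    then show ?thesis unfolding good3_def F_def by simp
  qed
  interpret seqc F
  proof
    fix i
    show "good3 F i (Suc i) (Suc (Suc i))" using g[of 2 i] by (simp add: numeral_eq_Suc)
    show "good3 F i (Suc i) (Suc (Suc (Suc i)))" using g[of 3 i] by (simp add: numeral_eq_Suc)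
  qed
  show False
  proof (rule uncol)
    show "F (j + n) = F j" for j unfolding F_def by simp
    show "0 < n" using n by simp
    assume ev: "even n"
    then have "{0,4,8} \<in> EE n" unfolding EE_def by simp
    then have "good3 f 0 4 8" using edge_good[OF f] by simp
    moreover have "(4::nat) mod n = 4" "(8::nat) mod n = 8" using n by auto
    ultimately show "good3 F 0 4 8" unfolding F_def good3_def by simp
  qed
qed

section \<open>Deletion colorings\<close>

definition gs :: "nat \<Rightarrow> nat \<Rightarrow> nat" where
  "gs s d = (if d \<le> s then d mod 2 else (s + (d - s) div 2) mod 2)"

lemma gs_lt2: "gs s d < 2" unfolding gs_def by auto

lemma parity_neq: "(x::nat) mod 2 \<noteq> (x + 1) mod 2"
  by presburger

lemma gs_alt: "d + 1 \<le> s \<Longrightarrow> gs s d \<noteq> gs s (d+1)"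
  unfolding gs_def using parity_neq[of d] by auto

lemma gs_pair: "gs s (s + t) = (s + t div 2) mod 2"
  unfolding gs_def by (cases t) auto

lemma gs_ok1: "\<not> (gs s d = gs s (d+1) \<and> gs s (d+1) = gs s (d+2))"
proof (cases "d + 1 \<le> s")
  case True then show ?thesis using gs_alt by blast
next
  case False
  then obtain t where t: "d = s + t" using le_Suc_ex[of s d] by auto
  have "gs s d = (s + t div 2) mod 2" using gs_pair t by simp
  moreover have "gs s (d+2) = (s + t div 2 + 1) mod 2"
    using gs_pair[of s "t+2"] t by (simp add: algebra_simps)
  ultimately have "gs s d \<noteq> gs s (d+2)" using parity_neq by metis
  then show ?thesis by auto
qed

lemma gs_ok2: "\<not> (gs s d = gs s (d+1) \<and> gs s (d+1) = gs s (d+3))"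
proof (cases "d + 1 \<le> s")
  case True then show ?thesis using gs_alt by blast
next
  case False
  then obtain t where t: "d = s + t" using le_Suc_ex[of s d] by auto
  show ?thesis
  proof (cases "even t")
    case True
    have "(t+1) div 2 = t div 2" "(t+3) div 2 = t div 2 + 1" using True by presburger+
    then have "gs s (d+1) = (s + t div 2) mod 2" "gs s (d+3) = (s + t div 2 + 1) mod 2"
      using gs_pair[of s "t+1"] gs_pair[of s "t+3"] t by (simp_all add: algebra_simps)
    then have "gs s (d+1) \<noteq> gs s (d+3)" using parity_neq by metis
    then show ?thesis by auto
  next
    case False
    have "(t+1) div 2 = t div 2 + 1" using False by presburger
    then have "gs s d = (s + t div 2) mod 2" "gs s (d+1) = (s + t div 2 + 1) mod 2"
      using gs_pair[of s "t"] gs_pair[of s "t+1"] t by (simp_all add: algebra_simps)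
    then have "gs s d \<noteq> gs s (d+1)" using parity_neq by metis
    then show ?thesis by auto
  qed
qed

lemma good3_bin:
  assumes "h a < 2" "h b < 2" "h c < 2" "\<not> (h a = h b \<and> h b = h c)"
  shows "good3 h a b c"
  using assms unfolding good3_def by auto

lemma cyc_del_ok:
  assumes n: "4 \<le> n" "v < n"
    and skip: "\<not> (gs s (n-3) = gs s (n-2) \<and> gs s (n-2) = gs s 0)"
    and i: "i < n" and c: "c = 2 \<or> c = 3" and nv: "v \<notin> {i, Suc i mod n, (i+c) mod n}"
  shows "good3 (\<lambda>j. gs s ((j + (n - Suc v)) mod n)) i (Suc i mod n) ((i+c) mod n)"
proof -
  define a where "a = n - Suc v"
  define P where "P x = (x + a) mod n" for x
  have pv: "P v = n - 1" unfolding P_def a_def using n by simp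
  have inj: "x = v" if "x < n" "P x = n - 1" for x
  proof (rule ccontr)
    assume "x \<noteq> v"
    then have "x < v \<or> v < x" by auto
    then have "(a + x) mod n \<noteq> (a + v) mod n"
      using mod_neq[of x v n a] mod_neq[of v x n a] that(1) n(2) by auto
    then show False using that(2) pv unfolding P_def by (simp add: add.commute)
  qed
  have shift: "P ((i + k) mod n) = (P i + k) mod n" for k
  proof -
    have e1: "((i + k) mod n + a) mod n = (i + k + a) mod n" by (rule mod_add_left_eq)
    have e2: "((i + a) mod n + k) mod n = (i + a + k) mod n" by (rule mod_add_left_eq)
    have "i + k + a = i + a + k" by simp
    then show ?thesis unfolding P_def using e1 e2 by metis
  qed
  define p where "p = P i"
  have pn: "p < n" unfolding p_def P_def using n by simp
  have p1: "p \<noteq> n - 1" using inj[OF i] nv unfolding p_def by auto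
  have s1: "P (Suc i mod n) = (p + 1) mod n" using shift[of 1] unfolding p_def by simp
  have sc: "P ((i + c) mod n) = (p + c) mod n" using shift[of c] unfolding p_def by simp
  have m1: "Suc i mod n < n" "(i + c) mod n < n" using n by auto
  have nv1: "(p + 1) mod n \<noteq> n - 1" using inj[OF m1(1)] s1 nv by auto
  have nvc: "(p + c) mod n \<noteq> n - 1" using inj[OF m1(2)] sc nv by auto
  let ?h = "\<lambda>j. gs s ((j + a) mod n)"
  have "\<not> (gs s p = gs s ((p+1) mod n) \<and> gs s ((p+1) mod n) = gs s ((p+c) mod n))"
  proof (cases "p + c + 1 < n")
    case True
    then have "(p+1) mod n = p + 1" "(p+c) mod n = p + c" by auto
    then show ?thesis using c gs_ok1[of s p] gs_ok2[of s p] by auto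
  next
    case False
    show ?thesis
    proof (cases "c = 2")
      case True
      then have "p = n - 3 \<or> p = n - 2" using False pn p1 by auto
      moreover have "p = n - 3 \<Longrightarrow> (p + c) mod n = n - 1" using True n by simp
      moreover have "p = n - 2 \<Longrightarrow> (p + 1) mod n = n - 1" using n by simp
      ultimately show ?thesis using nv1 nvc by blast
    next
      case c3: False
      then have c3: "c = 3" using c by simp
      then have "p = n - 4 \<or> p = n - 3 \<or> p = n - 2" using False pn p1 by auto
      moreover have "p = n - 4 \<Longrightarrow> (p + c) mod n = n - 1" using c3 n by simp
      moreover have "p = n - 2 \<Longrightarrow> (p + 1) mod n = n - 1" using n by simp
      moreover have "p = n - 3 \<Longrightarrow> (p + 1) mod n = n - 2 \<and> (p + c) mod n = 0" using c3 n by simp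
      ultimately show ?thesis using nv1 nvc skip by auto
    qed
  qed
  moreover have "?h i = gs s p" "?h (Suc i mod n) = gs s ((p+1) mod n)"
    "?h ((i+c) mod n) = gs s ((p+c) mod n)"
    using s1 sc unfolding p_def P_def by auto
  ultimately have "\<not> (?h i = ?h (Suc i mod n) \<and> ?h (Suc i mod n) = ?h ((i+c) mod n))" by simp
  then show ?thesis unfolding a_def by (intro good3_bin) (auto simp: gs_lt2)
qed

lemma skip_alt:
  assumes "4 \<le> n"
  shows "\<not> (gs n (n-3) = gs n (n-2) \<and> gs n (n-2) = gs n 0)"
proof -
  have "gs n (n-3) = (n-3) mod 2" "gs n (n-2) = (n-3+1) mod 2" using assms unfolding gs_def
    by (auto simp: Suc_diff_Suc numeral_eq_Suc)
  then show ?thesis using parity_neq[of "n-3"] by auto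
qed

lemma skip_sw:
  assumes "even n" "even s" "s + 4 \<le> n"
  shows "\<not> (gs s (n-3) = gs s (n-2) \<and> gs s (n-2) = gs s 0)"
proof -
  have "odd (n - 3 - s)" using assms by presburger
  then obtain u where u0: "n - 3 - s = 2*u+1" by (rule oddE)
  have u: "n - 3 = s + (2*u+1)" using u0 assms by simp
  have "n - 2 = s + (2*u+2)" using u assms by simp
  then have "gs s (n-2) = (s + u + 1) mod 2" using gs_pair[of s "2*u+2"] by simp
  moreover have "gs s (n-3) = (s + u) mod 2" using gs_pair[of s "2*u+1"] u by simp
  ultimately show ?thesis using parity_neq[of "s+u"] by auto
qed

lemma sw_qr:
  assumes "q + 4 \<le> r" "even (r - q)" "s = 2 * ((r - 1) div 2)"
  shows "q \<le> s" "s < r" "even s" "gs s q \<noteq> gs s r"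
proof -
  have rs: "r = s + 1 \<or> r = s + 2" using assms(1,3) by linarith
  show "even s" using assms(3) by simp
  show "q \<le> s" "s < r" using rs assms(1) by auto
  have "gs s q = q mod 2" using \<open>q \<le> s\<close> unfolding gs_def by simp
  moreover have "gs s r = (s + (r - s) div 2) mod 2" using \<open>s < r\<close> unfolding gs_def by simp
  moreover have "q mod 2 = r mod 2"
  proof -
    obtain k where k: "r - q = 2*k" using assms(2) by (rule evenE)
    then have "r = q + 2*k" using assms(1) by simp
    then show ?thesis by simp
  qed
  moreover have "r mod 2 \<noteq> (s + (r - s) div 2) mod 2"
  proof (cases "r = s + 1")
    case True then show ?thesis using \<open>even s\<close> by presburger
  next
    case False then have "r = s + 2" using rs by simp
    then show ?thesis using \<open>even s\<close> by presburger
  qed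
  ultimately show "gs s q \<noteq> gs s r" by simp
qed

lemma EE_vc_gen:
  assumes n: "9 \<le> n" "v < n"
    and skip: "\<not> (gs s (n-3) = gs s (n-2) \<and> gs s (n-2) = gs s 0)"
    and X: "even n \<Longrightarrow> v \<notin> {0,4,8} \<Longrightarrow> good3 (\<lambda>j. gs s ((j + (n - Suc v)) mod n)) 0 4 8"
  shows "colorable {e \<in> EE n. v \<notin> e}"
proof -
  let ?f = "\<lambda>j. gs s ((j + (n - Suc v)) mod n)"
  have "proper_coloring {e \<in> EE n. v \<notin> e} ?f"
    unfolding proper_coloring_def
  proof
    fix e assume e: "e \<in> {e \<in> EE n. v \<notin> e}"
    then have eE: "e \<in> EE n" "v \<notin> e" by auto
    then have "e \<in> CE n \<or> (even n \<and> e = {0,4,8})" unfolding EE_def by (auto split: if_splits)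
    then show "1 < card (?f ` e) \<and> card (?f ` e) < card e"
    proof
      assume "e \<in> CE n"
      then obtain i c where i: "i < n" "c = 2 \<or> c = 3" "e = {i, Suc i mod n, (i+c) mod n}"
        unfolding CE_def cyc1_def cyc2_def by blast
      have d: "(i+0) mod n \<noteq> (i+1) mod n" "(i+0) mod n \<noteq> (i+c) mod n" "(i+1) mod n \<noteq> (i+c) mod n"
        using mod_neq[of 0 1 n i] mod_neq[of 0 c n i] mod_neq[of 1 c n i] i(2) n(1) by auto
      then have d': "i \<noteq> Suc i mod n" "i \<noteq> (i+c) mod n" "Suc i mod n \<noteq> (i+c) mod n"
        using i(1) by auto
      have "good3 ?f i (Suc i mod n) ((i+c) mod n)"
        by (rule cyc_del_ok) (use n skip i eE(2) in auto)
      then have "1 < card (?f ` {i, Suc i mod n, (i+c) mod n}) \<and> card (?f ` {i, Suc i mod n, (i+c) mod n}) < card {i, Suc i mod n, (i+c) mod n}"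
        using card_img3[OF d', of ?f] by blast
      then show ?thesis unfolding i(3) .
    next
      assume a: "even n \<and> e = {0,4,8}"
      then have "v \<notin> {0,4,8}" using eE(2) by simp
      then have "good3 ?f 0 4 8" using X a by blast
      then have "1 < card (?f ` {0,4,8}) \<and> card (?f ` {0,4,8}) < card {0::nat,4,8}"
        using card_img3[of 0 4 8 ?f] by simp
      then show ?thesis using a by simp
    qed
  qed
  then show ?thesis unfolding colorable_def by blast
qed

lemma EE_vc:
  assumes n: "9 \<le> n" "odd n \<or> 12 \<le> n" and v: "v < n"
  shows "colorable {e \<in> EE n. v \<notin> e}"
proof (cases "odd n \<or> v \<in> {0,4,8}")
  case True
  show ?thesis
    by (rule EE_vc_gen[of n v n]) (use n v True skip_alt[of n] in auto)
next
  case False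
  then have ev: "even n" and vX: "v \<noteq> 0" "v \<noteq> 4" "v \<noteq> 8" by auto
  then have n12: "12 \<le> n" using n(2) by simp
  define a where "a = n - Suc v"
  have ex: "\<exists>q r. q + 4 \<le> r \<and> even (r - q) \<and> r + 2 \<le> n \<and>
      q \<in> {(0 + a) mod n, (4 + a) mod n, (8 + a) mod n} \<and> r \<in> {(0 + a) mod n, (4 + a) mod n, (8 + a) mod n}"
  proof -
    have p0: "(0 + a) mod n = n - 1 - v" unfolding a_def using v by simp
    consider "v < 4" | "4 < v \<and> v < 8" | "8 < v" using vX by linarith
    then show ?thesis
    proof cases
      case 1
      have "8 + a = (7 - v) + n" unfolding a_def using 1 v by simp
      then have p8: "(8 + a) mod n = 7 - v" using n12 by simp
      have "even (n - 1 - v - (7 - v))" using ev 1 n12 by simp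
      then show ?thesis using p0 p8 1 vX n12 by (intro exI[of _ "7 - v"] exI[of _ "n - 1 - v"]) auto
    next
      case 2
      have "4 + a = n + 3 - v" unfolding a_def using 2 v by simp
      moreover have "n + 3 - v < n" using 2 v by linarith
      ultimately have p4: "(4 + a) mod n = n + 3 - v" by simp
      have "n + 3 - v - (n - 1 - v) = 4" using 2 v by simp
      then show ?thesis using p0 p4 2 by (intro exI[of _ "n - 1 - v"] exI[of _ "n + 3 - v"]) auto
    next
      case 3
      have "4 + a = n + 3 - v" "8 + a = n + 7 - v" unfolding a_def using 3 v by simp_all
      moreover have "n + 3 - v < n" "n + 7 - v < n" using 3 v by linarith+
      ultimately have p4: "(4 + a) mod n = n + 3 - v" and p8: "(8 + a) mod n = n + 7 - v" by simp_all
      have "n + 7 - v - (n + 3 - v) = 4" using 3 v by simp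
      then show ?thesis using p4 p8 3 v by (intro exI[of _ "n + 3 - v"] exI[of _ "n + 7 - v"]) auto
    qed
  qed
  then obtain q r where qr: "q + 4 \<le> r" "even (r - q)" "r + 2 \<le> n"
    and qm: "q \<in> {(0 + a) mod n, (4 + a) mod n, (8 + a) mod n}"
    and rm: "r \<in> {(0 + a) mod n, (4 + a) mod n, (8 + a) mod n}" by blast
  define s where "s = 2 * ((r - 1) div 2)"
  have sw: "q \<le> s" "s < r" "even s" "gs s q \<noteq> gs s r" using sw_qr[OF qr(1,2) s_def] by auto
  have s4: "s + 4 \<le> n" using sw(2,3) qr(3) ev by presburger
  show ?thesis
  proof (rule EE_vc_gen[of n v s])
    show "9 \<le> n" "v < n" using n v by auto
    show "\<not> (gs s (n-3) = gs s (n-2) \<and> gs s (n-2) = gs s 0)" by (rule skip_sw[OF ev sw(3) s4])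
    show "good3 (\<lambda>j. gs s ((j + (n - Suc v)) mod n)) 0 4 8"
    proof (rule good3_bin)
      show "gs s ((0 + (n - Suc v)) mod n) < 2" "gs s ((4 + (n - Suc v)) mod n) < 2"
        "gs s ((8 + (n - Suc v)) mod n) < 2" by (rule gs_lt2)+
      show "\<not> (gs s ((0 + (n - Suc v)) mod n) = gs s ((4 + (n - Suc v)) mod n) \<and>
             gs s ((4 + (n - Suc v)) mod n) = gs s ((8 + (n - Suc v)) mod n))"
        using qm rm sw(4) unfolding a_def by auto
    qed
  qed
qed

section \<open>Explicit bases\<close>

definition tri :: "nat \<times> nat \<times> nat \<Rightarrow> nat set" where
  "tri t = (case t of (a,b,c) \<Rightarrow> {a,b,c})"

lemma explicit_good:
  assumes f: "proper_coloring (tri ` set T) f"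
    and d: "list_all (\<lambda>(a,b,c). a\<noteq>b \<and> a\<noteq>c \<and> b\<noteq>c) T"
  shows "list_all (\<lambda>(a,b,c). good3 f a b c) T"
  unfolding list_all_iff
proof
  fix x assume x: "x \<in> set T"
  obtain a b c where abc: "x = (a,b,c)" by (cases x) auto
  have "{a,b,c} \<in> tri ` set T" using x abc unfolding tri_def by force
  moreover have "a\<noteq>b" "a\<noteq>c" "b\<noteq>c" using d x abc unfolding list_all_iff by auto
  ultimately show "case x of (a,b,c) \<Rightarrow> good3 f a b c" using edge_good[OF f] abc by simp
qed

lemma explicit_vc:
  assumes d: "list_all (\<lambda>(a,b,c). a\<noteq>b \<and> a\<noteq>c \<and> b\<noteq>c) T"
    and g: "list_all (\<lambda>(a,b,c). v = a \<or> v = b \<or> v = c \<or> good3 f a b c) T"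
  shows "colorable {e \<in> tri ` set T. v \<notin> e}"
proof -
  have "proper_coloring {e \<in> tri ` set T. v \<notin> e} f"
    unfolding proper_coloring_def
  proof
    fix e assume e: "e \<in> {e \<in> tri ` set T. v \<notin> e}"
    then obtain a b c where abc: "(a,b,c) \<in> set T" "e = {a,b,c}" "v \<notin> e"
      unfolding tri_def by force
    have dd: "a\<noteq>b" "a\<noteq>c" "b\<noteq>c" using d abc(1) unfolding list_all_iff by auto
    have "good3 f a b c" using g abc unfolding list_all_iff by fastforce
    then show "1 < card (f ` e) \<and> card (f ` e) < card e"
      using card_img3[OF dd, of f] abc(2) by simp
  qed
  then show ?thesis unfolding colorable_def by blast
qed

definition good_family :: "nat \<Rightarrow> nat set set \<Rightarrow> bool" where
  "good_family n E \<longleftrightarrow> finite E \<and> (\<forall>e\<in>E. e \<subseteq> {..<n}) \<and> (\<forall>e\<in>E. card e = 3) \<and>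
     \<not> colorable E \<and> (\<forall>v<n. colorable {e\<in>E. v \<notin> e})"

lemma explicit_base:
  assumes d: "list_all (\<lambda>(a,b,c). a\<noteq>b \<and> a\<noteq>c \<and> b\<noteq>c) T"
    and b: "list_all (\<lambda>(a,b,c). a<n \<and> b<n \<and> c<n) T"
    and unc: "\<not> colorable (tri ` set T)"
    and vc: "\<And>v. v < n \<Longrightarrow> colorable {e \<in> tri ` set T. v \<notin> e}"
  shows "good_family n (tri ` set T) \<and> card (tri ` set T) \<le> length T"
proof -
  have "card (tri ` set T) \<le> length T"
    using card_image_le[of "set T" tri] card_length[of T] by simp
  moreover have "\<forall>e\<in>tri ` set T. e \<subseteq> {..<n}" using b unfolding list_all_iff tri_def by auto
  moreover have "\<forall>e\<in>tri ` set T. card e = 3" using d unfolding list_all_iff tri_def by auto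
  ultimately show ?thesis unfolding good_family_def using unc vc by auto
qed

definition T6 :: "(nat \<times> nat \<times> nat) list" where "T6 = [(0,1,2), (0,1,3), (0,2,5), (0,3,4), (0,4,5), (1,2,4), (1,4,5), (2,3,4), (2,3,5), (0,2,4)]"

lemma base6_unc: "\<not> colorable (tri ` set T6)"
proof
  assume "colorable (tri ` set T6)"
  then obtain f where f: "proper_coloring (tri ` set T6) f" unfolding colorable_def by blast
  have "list_all (\<lambda>(a,b,c). good3 f a b c) T6" by (rule explicit_good[OF f]) (simp add: T6_def)
  then have "good3 f 0 1 2 \<and> good3 f 0 1 3 \<and> good3 f 0 2 5 \<and> good3 f 0 3 4 \<and> good3 f 0 4 5 \<and> good3 f 1 2 4 \<and> good3 f 1 4 5 \<and> good3 f 2 3 4 \<and> good3 f 2 3 5 \<and> good3 f 0 2 4" by (simp add: T6_def)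
  then show False unfolding good3_def by smt
qed

lemma base6_v0: "colorable {e \<in> tri ` set T6. 0 \<notin> e}"
  by (rule explicit_vc[where f="(\<lambda>j::nat. if j \<in> {4,5} then 1 else if j \<in> {} then 2 else (0::nat))"]) (simp_all add: T6_def good3_def)

lemma base6_v1: "colorable {e \<in> tri ` set T6. 1 \<notin> e}"
  by (rule explicit_vc[where f="(\<lambda>j::nat. if j \<in> {4,5} then 1 else if j \<in> {} then 2 else (0::nat))"]) (simp_all add: T6_def good3_def)

lemma base6_v2: "colorable {e \<in> tri ` set T6. 2 \<notin> e}"
  by (rule explicit_vc[where f="(\<lambda>j::nat. if j \<in> {3,5} then 1 else if j \<in> {} then 2 else (0::nat))"]) (simp_all add: T6_def good3_def)

lemma base6_v3: "colorable {e \<in> tri ` set T6. 3 \<notin> e}"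
  by (rule explicit_vc[where f="(\<lambda>j::nat. if j \<in> {2,5} then 1 else if j \<in> {} then 2 else (0::nat))"]) (simp_all add: T6_def good3_def)

lemma base6_v4: "colorable {e \<in> tri ` set T6. 4 \<notin> e}"
  by (rule explicit_vc[where f="(\<lambda>j::nat. if j \<in> {2,3} then 1 else if j \<in> {} then 2 else (0::nat))"]) (simp_all add: T6_def good3_def)

lemma base6_v5: "colorable {e \<in> tri ` set T6. 5 \<notin> e}"
  by (rule explicit_vc[where f="(\<lambda>j::nat. if j \<in> {2,3} then 1 else if j \<in> {} then 2 else (0::nat))"]) (simp_all add: T6_def good3_def)

lemma base6_vc: assumes "v < 6" shows "colorable {e \<in> tri ` set T6. v \<notin> e}"
proof -
  have "v = 0 \<or> v = 1 \<or> v = 2 \<or> v = 3 \<or> v = 4 \<or> v = 5" using assms by presburger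
  then show ?thesis using base6_v0 base6_v1 base6_v2 base6_v3 base6_v4 base6_v5 by (elim disjE) blast+
qed

lemma base6: "good_family 6 (tri ` set T6) \<and> card (tri ` set T6) \<le> 10"
proof -
  have "good_family 6 (tri ` set T6) \<and> card (tri ` set T6) \<le> length T6"
    by (rule explicit_base[OF _ _ base6_unc base6_vc]) (simp_all add: T6_def)
  then show ?thesis by (simp add: T6_def)
qed

definition T7 :: "(nat \<times> nat \<times> nat) list" where "T7 = [(0,1,2), (0,1,3), (0,2,6), (0,4,5), (0,5,6), (1,2,4), (1,5,6), (2,3,4), (2,3,5), (3,4,5), (3,4,6), (0,3,4)]"

lemma base7_unc: "\<not> colorable (tri ` set T7)"
proof
  assume "colorable (tri ` set T7)"
  then obtain f where f: "proper_coloring (tri ` set T7) f" unfolding colorable_def by blast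
  have "list_all (\<lambda>(a,b,c). good3 f a b c) T7" by (rule explicit_good[OF f]) (simp add: T7_def)
  then have "good3 f 0 1 2 \<and> good3 f 0 1 3 \<and> good3 f 0 2 6 \<and> good3 f 0 4 5 \<and> good3 f 0 5 6 \<and> good3 f 1 2 4 \<and> good3 f 1 5 6 \<and> good3 f 2 3 4 \<and> good3 f 2 3 5 \<and> good3 f 3 4 5 \<and> good3 f 3 4 6 \<and> good3 f 0 3 4" by (simp add: T7_def)
  then show False unfolding good3_def by smt
qed

lemma base7_v0: "colorable {e \<in> tri ` set T7. 0 \<notin> e}"
  by (rule explicit_vc[where f="(\<lambda>j::nat. if j \<in> {4,5} then 1 else if j \<in> {} then 2 else (0::nat))"]) (simp_all add: T7_def good3_def)

lemma base7_v1: "colorable {e \<in> tri ` set T7. 1 \<notin> e}"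
  by (rule explicit_vc[where f="(\<lambda>j::nat. if j \<in> {4,5,6} then 1 else if j \<in> {} then 2 else (0::nat))"]) (simp_all add: T7_def good3_def)

lemma base7_v2: "colorable {e \<in> tri ` set T7. 2 \<notin> e}"
  by (rule explicit_vc[where f="(\<lambda>j::nat. if j \<in> {3,5} then 1 else if j \<in> {} then 2 else (0::nat))"]) (simp_all add: T7_def good3_def)

lemma base7_v3: "colorable {e \<in> tri ` set T7. 3 \<notin> e}"
  by (rule explicit_vc[where f="(\<lambda>j::nat. if j \<in> {2,5} then 1 else if j \<in> {} then 2 else (0::nat))"]) (simp_all add: T7_def good3_def)

lemma base7_v4: "colorable {e \<in> tri ` set T7. 4 \<notin> e}"
  by (rule explicit_vc[where f="(\<lambda>j::nat. if j \<in> {2,3,6} then 1 else if j \<in> {} then 2 else (0::nat))"]) (simp_all add: T7_def good3_def)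

lemma base7_v5: "colorable {e \<in> tri ` set T7. 5 \<notin> e}"
  by (rule explicit_vc[where f="(\<lambda>j::nat. if j \<in> {2,3} then 1 else if j \<in> {} then 2 else (0::nat))"]) (simp_all add: T7_def good3_def)

lemma base7_v6: "colorable {e \<in> tri ` set T7. 6 \<notin> e}"
  by (rule explicit_vc[where f="(\<lambda>j::nat. if j \<in> {1,4,5} then 1 else if j \<in> {} then 2 else (0::nat))"]) (simp_all add: T7_def good3_def)

lemma base7_vc: assumes "v < 7" shows "colorable {e \<in> tri ` set T7. v \<notin> e}"
proof -
  have "v = 0 \<or> v = 1 \<or> v = 2 \<or> v = 3 \<or> v = 4 \<or> v = 5 \<or> v = 6" using assms by presburger
  then show ?thesis using base7_v0 base7_v1 base7_v2 base7_v3 base7_v4 base7_v5 base7_v6 by (elim disjE) blast+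
qed

lemma base7: "good_family 7 (tri ` set T7) \<and> card (tri ` set T7) \<le> 12"
proof -
  have "good_family 7 (tri ` set T7) \<and> card (tri ` set T7) \<le> length T7"
    by (rule explicit_base[OF _ _ base7_unc base7_vc]) (simp_all add: T7_def)
  then show ?thesis by (simp add: T7_def)
qed

definition T8 :: "(nat \<times> nat \<times> nat) list" where "T8 = [(0,1,5), (0,1,6), (0,2,4), (0,4,5), (0,5,6), (0,5,7), (1,2,5), (1,3,4), (1,5,7), (2,3,4), (2,3,5), (2,6,7), (4,5,6)]"

lemma base8_unc: "\<not> colorable (tri ` set T8)"
proof
  assume "colorable (tri ` set T8)"
  then obtain f where f: "proper_coloring (tri ` set T8) f" unfolding colorable_def by blast
  have "list_all (\<lambda>(a,b,c). good3 f a b c) T8" by (rule explicit_good[OF f]) (simp add: T8_def)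
  then have "good3 f 0 1 5 \<and> good3 f 0 1 6 \<and> good3 f 0 2 4 \<and> good3 f 0 4 5 \<and> good3 f 0 5 6 \<and> good3 f 0 5 7 \<and> good3 f 1 2 5 \<and> good3 f 1 3 4 \<and> good3 f 1 5 7 \<and> good3 f 2 3 4 \<and> good3 f 2 3 5 \<and> good3 f 2 6 7 \<and> good3 f 4 5 6" by (simp add: T8_def)
  then show False unfolding good3_def by smt
qed

lemma base8_v0: "colorable {e \<in> tri ` set T8. 0 \<notin> e}"
  by (rule explicit_vc[where f="(\<lambda>j::nat. if j \<in> {4,5,7} then 1 else if j \<in> {} then 2 else (0::nat))"]) (simp_all add: T8_def good3_def)

lemma base8_v1: "colorable {e \<in> tri ` set T8. 1 \<notin> e}"
  by (rule explicit_vc[where f="(\<lambda>j::nat. if j \<in> {4,5,7} then 1 else if j \<in> {} then 2 else (0::nat))"]) (simp_all add: T8_def good3_def)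

lemma base8_v2: "colorable {e \<in> tri ` set T8. 2 \<notin> e}"
  by (rule explicit_vc[where f="(\<lambda>j::nat. if j \<in> {3,5,6} then 1 else if j \<in> {} then 2 else (0::nat))"]) (simp_all add: T8_def good3_def)

lemma base8_v3: "colorable {e \<in> tri ` set T8. 3 \<notin> e}"
  by (rule explicit_vc[where f="(\<lambda>j::nat. if j \<in> {2,5,6} then 1 else if j \<in> {} then 2 else (0::nat))"]) (simp_all add: T8_def good3_def)

lemma base8_v4: "colorable {e \<in> tri ` set T8. 4 \<notin> e}"
  by (rule explicit_vc[where f="(\<lambda>j::nat. if j \<in> {5,6} then 1 else if j \<in> {} then 2 else (0::nat))"]) (simp_all add: T8_def good3_def)

lemma base8_v5: "colorable {e \<in> tri ` set T8. 5 \<notin> e}"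
  by (rule explicit_vc[where f="(\<lambda>j::nat. if j \<in> {4,6} then 1 else if j \<in> {} then 2 else (0::nat))"]) (simp_all add: T8_def good3_def)

lemma base8_v6: "colorable {e \<in> tri ` set T8. 6 \<notin> e}"
  by (rule explicit_vc[where f="(\<lambda>j::nat. if j \<in> {4,5} then 1 else if j \<in> {} then 2 else (0::nat))"]) (simp_all add: T8_def good3_def)

lemma base8_v7: "colorable {e \<in> tri ` set T8. 7 \<notin> e}"
  by (rule explicit_vc[where f="(\<lambda>j::nat. if j \<in> {1,4,5} then 1 else if j \<in> {} then 2 else (0::nat))"]) (simp_all add: T8_def good3_def)

lemma base8_vc: assumes "v < 8" shows "colorable {e \<in> tri ` set T8. v \<notin> e}"
proof -
  have "v = 0 \<or> v = 1 \<or> v = 2 \<or> v = 3 \<or> v = 4 \<or> v = 5 \<or> v = 6 \<or> v = 7" using assms by presburger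
  then show ?thesis using base8_v0 base8_v1 base8_v2 base8_v3 base8_v4 base8_v5 base8_v6 base8_v7 by (elim disjE) blast+
qed

lemma base8: "good_family 8 (tri ` set T8) \<and> card (tri ` set T8) \<le> 13"
proof -
  have "good_family 8 (tri ` set T8) \<and> card (tri ` set T8) \<le> length T8"
    by (rule explicit_base[OF _ _ base8_unc base8_vc]) (simp_all add: T8_def)
  then show ?thesis by (simp add: T8_def)
qed

definition T9 :: "(nat \<times> nat \<times> nat) list" where "T9 = [(0,1,2), (0,1,3), (0,2,8), (0,6,7), (0,7,8), (1,2,4), (1,7,8), (2,3,4), (2,3,5), (3,4,5), (3,4,6), (4,5,6), (4,5,7), (5,6,7), (5,6,8), (0,4,5)]"

lemma base9_unc: "\<not> colorable (tri ` set T9)"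
proof
  assume "colorable (tri ` set T9)"
  then obtain f where f: "proper_coloring (tri ` set T9) f" unfolding colorable_def by blast
  have "list_all (\<lambda>(a,b,c). good3 f a b c) T9" by (rule explicit_good[OF f]) (simp add: T9_def)
  then have "good3 f 0 1 2 \<and> good3 f 0 1 3 \<and> good3 f 0 2 8 \<and> good3 f 0 6 7 \<and> good3 f 0 7 8 \<and> good3 f 1 2 4 \<and> good3 f 1 7 8 \<and> good3 f 2 3 4 \<and> good3 f 2 3 5 \<and> good3 f 3 4 5 \<and> good3 f 3 4 6 \<and> good3 f 4 5 6 \<and> good3 f 4 5 7 \<and> good3 f 5 6 7 \<and> good3 f 5 6 8 \<and> good3 f 0 4 5" by (simp add: T9_def)
  then show False unfolding good3_def by smt
qed

lemma base9_v0: "colorable {e \<in> tri ` set T9. 0 \<notin> e}"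
  by (rule explicit_vc[where f="(\<lambda>j::nat. if j \<in> {4,5,8} then 1 else if j \<in> {} then 2 else (0::nat))"]) (simp_all add: T9_def good3_def)

lemma base9_v1: "colorable {e \<in> tri ` set T9. 1 \<notin> e}"
  by (rule explicit_vc[where f="(\<lambda>j::nat. if j \<in> {3,5,7,8} then 1 else if j \<in> {} then 2 else (0::nat))"]) (simp_all add: T9_def good3_def)

lemma base9_v2: "colorable {e \<in> tri ` set T9. 2 \<notin> e}"
  by (rule explicit_vc[where f="(\<lambda>j::nat. if j \<in> {3,5,7} then 1 else if j \<in> {} then 2 else (0::nat))"]) (simp_all add: T9_def good3_def)

lemma base9_v3: "colorable {e \<in> tri ` set T9. 3 \<notin> e}"
  by (rule explicit_vc[where f="(\<lambda>j::nat. if j \<in> {2,5,7} then 1 else if j \<in> {} then 2 else (0::nat))"]) (simp_all add: T9_def good3_def)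

lemma base9_v4: "colorable {e \<in> tri ` set T9. 4 \<notin> e}"
  by (rule explicit_vc[where f="(\<lambda>j::nat. if j \<in> {2,3,7,8} then 1 else if j \<in> {} then 2 else (0::nat))"]) (simp_all add: T9_def good3_def)

lemma base9_v5: "colorable {e \<in> tri ` set T9. 5 \<notin> e}"
  by (rule explicit_vc[where f="(\<lambda>j::nat. if j \<in> {2,3,7} then 1 else if j \<in> {} then 2 else (0::nat))"]) (simp_all add: T9_def good3_def)

lemma base9_v6: "colorable {e \<in> tri ` set T9. 6 \<notin> e}"
  by (rule explicit_vc[where f="(\<lambda>j::nat. if j \<in> {2,4,5,8} then 1 else if j \<in> {3} then 2 else (0::nat))"]) (simp_all add: T9_def good3_def)

lemma base9_v7: "colorable {e \<in> tri ` set T9. 7 \<notin> e}"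
  by (rule explicit_vc[where f="(\<lambda>j::nat. if j \<in> {2,4,5,8} then 1 else if j \<in> {3,6} then 2 else (0::nat))"]) (simp_all add: T9_def good3_def)

lemma base9_v8: "colorable {e \<in> tri ` set T9. 8 \<notin> e}"
  by (rule explicit_vc[where f="(\<lambda>j::nat. if j \<in> {2,4,5} then 1 else if j \<in> {3,6,7} then 2 else (0::nat))"]) (simp_all add: T9_def good3_def)

lemma base9_vc: assumes "v < 9" shows "colorable {e \<in> tri ` set T9. v \<notin> e}"
proof -
  have "v = 0 \<or> v = 1 \<or> v = 2 \<or> v = 3 \<or> v = 4 \<or> v = 5 \<or> v = 6 \<or> v = 7 \<or> v = 8" using assms by presburger
  then show ?thesis using base9_v0 base9_v1 base9_v2 base9_v3 base9_v4 base9_v5 base9_v6 base9_v7 base9_v8 by (elim disjE) blast+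
qed

lemma base9: "good_family 9 (tri ` set T9) \<and> card (tri ` set T9) \<le> 16"
proof -
  have "good_family 9 (tri ` set T9) \<and> card (tri ` set T9) \<le> length T9"
    by (rule explicit_base[OF _ _ base9_unc base9_vc]) (simp_all add: T9_def)
  then show ?thesis by (simp add: T9_def)
qed

definition T10 :: "(nat \<times> nat \<times> nat) list" where "T10 = [(0,1,2), (0,1,3), (0,2,9), (0,7,8), (0,8,9), (1,2,4), (1,8,9), (2,3,4), (2,3,5), (3,4,5), (3,4,6), (4,5,6), (4,5,7), (5,6,7), (5,6,8), (6,7,8), (6,7,9), (0,4,6)]"

lemma base10_unc: "\<not> colorable (tri ` set T10)"
proof
  assume "colorable (tri ` set T10)"
  then obtain f where f: "proper_coloring (tri ` set T10) f" unfolding colorable_def by blast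
  have "list_all (\<lambda>(a,b,c). good3 f a b c) T10" by (rule explicit_good[OF f]) (simp add: T10_def)
  then have "good3 f 0 1 2 \<and> good3 f 0 1 3 \<and> good3 f 0 2 9 \<and> good3 f 0 7 8 \<and> good3 f 0 8 9 \<and> good3 f 1 2 4 \<and> good3 f 1 8 9 \<and> good3 f 2 3 4 \<and> good3 f 2 3 5 \<and> good3 f 3 4 5 \<and> good3 f 3 4 6 \<and> good3 f 4 5 6 \<and> good3 f 4 5 7 \<and> good3 f 5 6 7 \<and> good3 f 5 6 8 \<and> good3 f 6 7 8 \<and> good3 f 6 7 9 \<and> good3 f 0 4 6" by (simp add: T10_def)
  then show False unfolding good3_def by smt
qed

lemma base10_v0: "colorable {e \<in> tri ` set T10. 0 \<notin> e}"
  by (rule explicit_vc[where f="(\<lambda>j::nat. if j \<in> {4,5,8,9} then 1 else if j \<in> {} then 2 else (0::nat))"]) (simp_all add: T10_def good3_def)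

lemma base10_v1: "colorable {e \<in> tri ` set T10. 1 \<notin> e}"
  by (rule explicit_vc[where f="(\<lambda>j::nat. if j \<in> {4,5,8,9} then 1 else if j \<in> {} then 2 else (0::nat))"]) (simp_all add: T10_def good3_def)

lemma base10_v2: "colorable {e \<in> tri ` set T10. 2 \<notin> e}"
  by (rule explicit_vc[where f="(\<lambda>j::nat. if j \<in> {3,6,7} then 1 else if j \<in> {9} then 2 else (0::nat))"]) (simp_all add: T10_def good3_def)

lemma base10_v3: "colorable {e \<in> tri ` set T10. 3 \<notin> e}"
  by (rule explicit_vc[where f="(\<lambda>j::nat. if j \<in> {2,9} then 1 else if j \<in> {6,7} then 2 else (0::nat))"]) (simp_all add: T10_def good3_def)

lemma base10_v4: "colorable {e \<in> tri ` set T10. 4 \<notin> e}"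
  by (rule explicit_vc[where f="(\<lambda>j::nat. if j \<in> {2,3,7,8} then 1 else if j \<in> {} then 2 else (0::nat))"]) (simp_all add: T10_def good3_def)

lemma base10_v5: "colorable {e \<in> tri ` set T10. 5 \<notin> e}"
  by (rule explicit_vc[where f="(\<lambda>j::nat. if j \<in> {2,3,6,8} then 1 else if j \<in> {} then 2 else (0::nat))"]) (simp_all add: T10_def good3_def)

lemma base10_v6: "colorable {e \<in> tri ` set T10. 6 \<notin> e}"
  by (rule explicit_vc[where f="(\<lambda>j::nat. if j \<in> {2,3,7,9} then 1 else if j \<in> {} then 2 else (0::nat))"]) (simp_all add: T10_def good3_def)

lemma base10_v7: "colorable {e \<in> tri ` set T10. 7 \<notin> e}"
  by (rule explicit_vc[where f="(\<lambda>j::nat. if j \<in> {2,3,6,9} then 1 else if j \<in> {} then 2 else (0::nat))"]) (simp_all add: T10_def good3_def)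

lemma base10_v8: "colorable {e \<in> tri ` set T10. 8 \<notin> e}"
  by (rule explicit_vc[where f="(\<lambda>j::nat. if j \<in> {2,3,6,7} then 1 else if j \<in> {} then 2 else (0::nat))"]) (simp_all add: T10_def good3_def)

lemma base10_v9: "colorable {e \<in> tri ` set T10. 9 \<notin> e}"
  by (rule explicit_vc[where f="(\<lambda>j::nat. if j \<in> {2,3,6,7} then 1 else if j \<in> {} then 2 else (0::nat))"]) (simp_all add: T10_def good3_def)

lemma base10_vc: assumes "v < 10" shows "colorable {e \<in> tri ` set T10. v \<notin> e}"
proof -
  have "v = 0 \<or> v = 1 \<or> v = 2 \<or> v = 3 \<or> v = 4 \<or> v = 5 \<or> v = 6 \<or> v = 7 \<or> v = 8 \<or> v = 9" using assms by presburger
  then show ?thesis using base10_v0 base10_v1 base10_v2 base10_v3 base10_v4 base10_v5 base10_v6 base10_v7 base10_v8 base10_v9 by (elim disjE) blast+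
qed

lemma base10: "good_family 10 (tri ` set T10) \<and> card (tri ` set T10) \<le> 18"
proof -
  have "good_family 10 (tri ` set T10) \<and> card (tri ` set T10) \<le> length T10"
    by (rule explicit_base[OF _ _ base10_unc base10_vc]) (simp_all add: T10_def)
  then show ?thesis by (simp add: T10_def)
qed

definition T11 :: "(nat \<times> nat \<times> nat) list" where "T11 = [(0,1,2), (0,1,3), (0,2,10), (0,8,9), (0,9,10), (1,2,4), (1,9,10), (2,3,4), (2,3,5), (3,4,5), (3,4,6), (4,5,6), (4,5,7), (5,6,7), (5,6,8), (6,7,8), (6,7,9), (7,8,9), (7,8,10), (0,4,7)]"

lemma base11_unc: "\<not> colorable (tri ` set T11)"
proof
  assume "colorable (tri ` set T11)"
  then obtain f where f: "proper_coloring (tri ` set T11) f" unfolding colorable_def by blast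
  have "list_all (\<lambda>(a,b,c). good3 f a b c) T11" by (rule explicit_good[OF f]) (simp add: T11_def)
  then have "good3 f 0 1 2 \<and> good3 f 0 1 3 \<and> good3 f 0 2 10 \<and> good3 f 0 8 9 \<and> good3 f 0 9 10 \<and> good3 f 1 2 4 \<and> good3 f 1 9 10 \<and> good3 f 2 3 4 \<and> good3 f 2 3 5 \<and> good3 f 3 4 5 \<and> good3 f 3 4 6 \<and> good3 f 4 5 6 \<and> good3 f 4 5 7 \<and> good3 f 5 6 7 \<and> good3 f 5 6 8 \<and> good3 f 6 7 8 \<and> good3 f 6 7 9 \<and> good3 f 7 8 9 \<and> good3 f 7 8 10 \<and> good3 f 0 4 7" by (simp add: T11_def)
  then show False unfolding good3_def by smt
qed

lemma base11_v0: "colorable {e \<in> tri ` set T11. 0 \<notin> e}"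
  by (rule explicit_vc[where f="(\<lambda>j::nat. if j \<in> {4,5,8,9} then 1 else if j \<in> {} then 2 else (0::nat))"]) (simp_all add: T11_def good3_def)

lemma base11_v1: "colorable {e \<in> tri ` set T11. 1 \<notin> e}"
  by (rule explicit_vc[where f="(\<lambda>j::nat. if j \<in> {4,5,8,9,10} then 1 else if j \<in> {} then 2 else (0::nat))"]) (simp_all add: T11_def good3_def)

lemma base11_v2: "colorable {e \<in> tri ` set T11. 2 \<notin> e}"
  by (rule explicit_vc[where f="(\<lambda>j::nat. if j \<in> {3,5,7,9} then 1 else if j \<in> {} then 2 else (0::nat))"]) (simp_all add: T11_def good3_def)

lemma base11_v3: "colorable {e \<in> tri ` set T11. 3 \<notin> e}"
  by (rule explicit_vc[where f="(\<lambda>j::nat. if j \<in> {2,5,7,9} then 1 else if j \<in> {} then 2 else (0::nat))"]) (simp_all add: T11_def good3_def)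

lemma base11_v4: "colorable {e \<in> tri ` set T11. 4 \<notin> e}"
  by (rule explicit_vc[where f="(\<lambda>j::nat. if j \<in> {2,3,10} then 1 else if j \<in> {7,8} then 2 else (0::nat))"]) (simp_all add: T11_def good3_def)

lemma base11_v5: "colorable {e \<in> tri ` set T11. 5 \<notin> e}"
  by (rule explicit_vc[where f="(\<lambda>j::nat. if j \<in> {2,3,7,9} then 1 else if j \<in> {} then 2 else (0::nat))"]) (simp_all add: T11_def good3_def)

lemma base11_v6: "colorable {e \<in> tri ` set T11. 6 \<notin> e}"
  by (rule explicit_vc[where f="(\<lambda>j::nat. if j \<in> {2,3,7,9} then 1 else if j \<in> {} then 2 else (0::nat))"]) (simp_all add: T11_def good3_def)

lemma base11_v7: "colorable {e \<in> tri ` set T11. 7 \<notin> e}"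
  by (rule explicit_vc[where f="(\<lambda>j::nat. if j \<in> {2,3,6,9} then 1 else if j \<in> {} then 2 else (0::nat))"]) (simp_all add: T11_def good3_def)

lemma base11_v8: "colorable {e \<in> tri ` set T11. 8 \<notin> e}"
  by (rule explicit_vc[where f="(\<lambda>j::nat. if j \<in> {2,3,6,7,10} then 1 else if j \<in> {} then 2 else (0::nat))"]) (simp_all add: T11_def good3_def)

lemma base11_v9: "colorable {e \<in> tri ` set T11. 9 \<notin> e}"
  by (rule explicit_vc[where f="(\<lambda>j::nat. if j \<in> {2,3,6,7} then 1 else if j \<in> {} then 2 else (0::nat))"]) (simp_all add: T11_def good3_def)

lemma base11_v10: "colorable {e \<in> tri ` set T11. 10 \<notin> e}"
  by (rule explicit_vc[where f="(\<lambda>j::nat. if j \<in> {2,4,6,7} then 1 else if j \<in> {3,5,8,9} then 2 else (0::nat))"]) (simp_all add: T11_def good3_def)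

lemma base11_vc: assumes "v < 11" shows "colorable {e \<in> tri ` set T11. v \<notin> e}"
proof -
  have "v = 0 \<or> v = 1 \<or> v = 2 \<or> v = 3 \<or> v = 4 \<or> v = 5 \<or> v = 6 \<or> v = 7 \<or> v = 8 \<or> v = 9 \<or> v = 10" using assms by presburger
  then show ?thesis using base11_v0 base11_v1 base11_v2 base11_v3 base11_v4 base11_v5 base11_v6 base11_v7 base11_v8 base11_v9 base11_v10 by (elim disjE) blast+
qed

lemma base11: "good_family 11 (tri ` set T11) \<and> card (tri ` set T11) \<le> 20"
proof -
  have "good_family 11 (tri ` set T11) \<and> card (tri ` set T11) \<le> length T11"
    by (rule explicit_base[OF _ _ base11_unc base11_vc]) (simp_all add: T11_def)
  then show ?thesis by (simp add: T11_def)
qed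

definition T12 :: "(nat \<times> nat \<times> nat) list" where "T12 = [(0,1,2), (0,1,3), (0,2,11), (0,9,10), (0,10,11), (1,2,4), (1,10,11), (2,3,4), (2,3,5), (3,4,5), (3,4,6), (4,5,6), (4,5,7), (5,6,7), (5,6,8), (6,7,8), (6,7,9), (7,8,9), (7,8,10), (8,9,10), (8,9,11), (0,4,8)]"

lemma base12_unc: "\<not> colorable (tri ` set T12)"
proof
  assume "colorable (tri ` set T12)"
  then obtain f where f: "proper_coloring (tri ` set T12) f" unfolding colorable_def by blast
  have "list_all (\<lambda>(a,b,c). good3 f a b c) T12" by (rule explicit_good[OF f]) (simp add: T12_def)
  then have "good3 f 0 1 2 \<and> good3 f 0 1 3 \<and> good3 f 0 2 11 \<and> good3 f 0 9 10 \<and> good3 f 0 10 11 \<and> good3 f 1 2 4 \<and> good3 f 1 10 11 \<and> good3 f 2 3 4 \<and> good3 f 2 3 5 \<and> good3 f 3 4 5 \<and> good3 f 3 4 6 \<and> good3 f 4 5 6 \<and> good3 f 4 5 7 \<and> good3 f 5 6 7 \<and> good3 f 5 6 8 \<and> good3 f 6 7 8 \<and> good3 f 6 7 9 \<and> good3 f 7 8 9 \<and> good3 f 7 8 10 \<and> good3 f 8 9 10 \<and> good3 f 8 9 11 \<and> good3 f 0 4 8" by (simp add: T12_def)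
  then show False unfolding good3_def by smt
qed

lemma base12_v0: "colorable {e \<in> tri ` set T12. 0 \<notin> e}"
  by (rule explicit_vc[where f="(\<lambda>j::nat. if j \<in> {4,5,8,9} then 1 else if j \<in> {11} then 2 else (0::nat))"]) (simp_all add: T12_def good3_def)

lemma base12_v1: "colorable {e \<in> tri ` set T12. 1 \<notin> e}"
  by (rule explicit_vc[where f="(\<lambda>j::nat. if j \<in> {4,5,8,9} then 1 else if j \<in> {11} then 2 else (0::nat))"]) (simp_all add: T12_def good3_def)

lemma base12_v2: "colorable {e \<in> tri ` set T12. 2 \<notin> e}"
  by (rule explicit_vc[where f="(\<lambda>j::nat. if j \<in> {3,5,8,9} then 1 else if j \<in> {11} then 2 else (0::nat))"]) (simp_all add: T12_def good3_def)

lemma base12_v3: "colorable {e \<in> tri ` set T12. 3 \<notin> e}"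
  by (rule explicit_vc[where f="(\<lambda>j::nat. if j \<in> {2,11} then 1 else if j \<in> {5,8,9} then 2 else (0::nat))"]) (simp_all add: T12_def good3_def)

lemma base12_v4: "colorable {e \<in> tri ` set T12. 4 \<notin> e}"
  by (rule explicit_vc[where f="(\<lambda>j::nat. if j \<in> {2,3,6,9,10} then 1 else if j \<in> {} then 2 else (0::nat))"]) (simp_all add: T12_def good3_def)

lemma base12_v5: "colorable {e \<in> tri ` set T12. 5 \<notin> e}"
  by (rule explicit_vc[where f="(\<lambda>j::nat. if j \<in> {2,3,11} then 1 else if j \<in> {8,9} then 2 else (0::nat))"]) (simp_all add: T12_def good3_def)

lemma base12_v6: "colorable {e \<in> tri ` set T12. 6 \<notin> e}"
  by (rule explicit_vc[where f="(\<lambda>j::nat. if j \<in> {2,3,7,9,10,11} then 1 else if j \<in> {8} then 2 else (0::nat))"]) (simp_all add: T12_def good3_def)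

lemma base12_v7: "colorable {e \<in> tri ` set T12. 7 \<notin> e}"
  by (rule explicit_vc[where f="(\<lambda>j::nat. if j \<in> {2,3,6,8,10} then 1 else if j \<in> {} then 2 else (0::nat))"]) (simp_all add: T12_def good3_def)

lemma base12_v8: "colorable {e \<in> tri ` set T12. 8 \<notin> e}"
  by (rule explicit_vc[where f="(\<lambda>j::nat. if j \<in> {2,3,6,7,10} then 1 else if j \<in> {} then 2 else (0::nat))"]) (simp_all add: T12_def good3_def)

lemma base12_v9: "colorable {e \<in> tri ` set T12. 9 \<notin> e}"
  by (rule explicit_vc[where f="(\<lambda>j::nat. if j \<in> {2,4,5,8,10} then 1 else if j \<in> {3,6,7} then 2 else (0::nat))"]) (simp_all add: T12_def good3_def)

lemma base12_v10: "colorable {e \<in> tri ` set T12. 10 \<notin> e}"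
  by (rule explicit_vc[where f="(\<lambda>j::nat. if j \<in> {2,4,5,8,9} then 1 else if j \<in> {3,6,7} then 2 else (0::nat))"]) (simp_all add: T12_def good3_def)

lemma base12_v11: "colorable {e \<in> tri ` set T12. 11 \<notin> e}"
  by (rule explicit_vc[where f="(\<lambda>j::nat. if j \<in> {2,4,6,8} then 1 else if j \<in> {3,5,7,9,10} then 2 else (0::nat))"]) (simp_all add: T12_def good3_def)

lemma base12_vc: assumes "v < 12" shows "colorable {e \<in> tri ` set T12. v \<notin> e}"
proof -
  have "v = 0 \<or> v = 1 \<or> v = 2 \<or> v = 3 \<or> v = 4 \<or> v = 5 \<or> v = 6 \<or> v = 7 \<or> v = 8 \<or> v = 9 \<or> v = 10 \<or> v = 11" using assms by presburger
  then show ?thesis using base12_v0 base12_v1 base12_v2 base12_v3 base12_v4 base12_v5 base12_v6 base12_v7 base12_v8 base12_v9 base12_v10 base12_v11 by (elim disjE) blast+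
qed

lemma base12: "good_family 12 (tri ` set T12) \<and> card (tri ` set T12) \<le> 22"
proof -
  have "good_family 12 (tri ` set T12) \<and> card (tri ` set T12) \<le> length T12"
    by (rule explicit_base[OF _ _ base12_unc base12_vc]) (simp_all add: T12_def)
  then show ?thesis by (simp add: T12_def)
qed

definition T14 :: "(nat \<times> nat \<times> nat) list" where "T14 = [(0,1,2), (0,1,3), (0,2,13), (0,11,12), (0,12,13), (1,2,4), (1,12,13), (2,3,4), (2,3,5), (3,4,5), (3,4,6), (4,5,6), (4,5,7), (5,6,7), (5,6,8), (6,7,8), (6,7,9), (7,8,9), (7,8,10), (8,9,10), (8,9,11), (9,10,11), (9,10,12), (10,11,12), (10,11,13), (0,4,10)]"

lemma base14_unc: "\<not> colorable (tri ` set T14)"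
proof
  assume "colorable (tri ` set T14)"
  then obtain f where f: "proper_coloring (tri ` set T14) f" unfolding colorable_def by blast
  have "list_all (\<lambda>(a,b,c). good3 f a b c) T14" by (rule explicit_good[OF f]) (simp add: T14_def)
  then have "good3 f 0 1 2 \<and> good3 f 0 1 3 \<and> good3 f 0 2 13 \<and> good3 f 0 11 12 \<and> good3 f 0 12 13 \<and> good3 f 1 2 4 \<and> good3 f 1 12 13 \<and> good3 f 2 3 4 \<and> good3 f 2 3 5 \<and> good3 f 3 4 5 \<and> good3 f 3 4 6 \<and> good3 f 4 5 6 \<and> good3 f 4 5 7 \<and> good3 f 5 6 7 \<and> good3 f 5 6 8 \<and> good3 f 6 7 8 \<and> good3 f 6 7 9 \<and> good3 f 7 8 9 \<and> good3 f 7 8 10 \<and> good3 f 8 9 10 \<and> good3 f 8 9 11 \<and> good3 f 9 10 11 \<and> good3 f 9 10 12 \<and> good3 f 10 11 12 \<and> good3 f 10 11 13 \<and> good3 f 0 4 10" by (simp add: T14_def)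
  then show False unfolding good3_def by smt
qed

lemma base14_v0: "colorable {e \<in> tri ` set T14. 0 \<notin> e}"
  by (rule explicit_vc[where f="(\<lambda>j::nat. if j \<in> {4,5,8,9,12,13} then 1 else if j \<in> {} then 2 else (0::nat))"]) (simp_all add: T14_def good3_def)

lemma base14_v1: "colorable {e \<in> tri ` set T14. 1 \<notin> e}"
  by (rule explicit_vc[where f="(\<lambda>j::nat. if j \<in> {4,5,8,9,12,13} then 1 else if j \<in> {} then 2 else (0::nat))"]) (simp_all add: T14_def good3_def)

lemma base14_v2: "colorable {e \<in> tri ` set T14. 2 \<notin> e}"
  by (rule explicit_vc[where f="(\<lambda>j::nat. if j \<in> {3,6,7,10,11} then 1 else if j \<in> {13} then 2 else (0::nat))"]) (simp_all add: T14_def good3_def)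

lemma base14_v3: "colorable {e \<in> tri ` set T14. 3 \<notin> e}"
  by (rule explicit_vc[where f="(\<lambda>j::nat. if j \<in> {2,13} then 1 else if j \<in> {6,7,10,11} then 2 else (0::nat))"]) (simp_all add: T14_def good3_def)

lemma base14_v4: "colorable {e \<in> tri ` set T14. 4 \<notin> e}"
  by (rule explicit_vc[where f="(\<lambda>j::nat. if j \<in> {2,3,7,8,11,12} then 1 else if j \<in> {} then 2 else (0::nat))"]) (simp_all add: T14_def good3_def)

lemma base14_v5: "colorable {e \<in> tri ` set T14. 5 \<notin> e}"
  by (rule explicit_vc[where f="(\<lambda>j::nat. if j \<in> {2,3,13} then 1 else if j \<in> {7,10,11} then 2 else (0::nat))"]) (simp_all add: T14_def good3_def)

lemma base14_v6: "colorable {e \<in> tri ` set T14. 6 \<notin> e}"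
  by (rule explicit_vc[where f="(\<lambda>j::nat. if j \<in> {2,3,7,8,11,12,13} then 1 else if j \<in> {9,10} then 2 else (0::nat))"]) (simp_all add: T14_def good3_def)

lemma base14_v7: "colorable {e \<in> tri ` set T14. 7 \<notin> e}"
  by (rule explicit_vc[where f="(\<lambda>j::nat. if j \<in> {2,3,6,13} then 1 else if j \<in> {10,11} then 2 else (0::nat))"]) (simp_all add: T14_def good3_def)

lemma base14_v8: "colorable {e \<in> tri ` set T14. 8 \<notin> e}"
  by (rule explicit_vc[where f="(\<lambda>j::nat. if j \<in> {2,3,6,7,10,12} then 1 else if j \<in> {} then 2 else (0::nat))"]) (simp_all add: T14_def good3_def)

lemma base14_v9: "colorable {e \<in> tri ` set T14. 9 \<notin> e}"
  by (rule explicit_vc[where f="(\<lambda>j::nat. if j \<in> {2,3,6,7,10,12} then 1 else if j \<in> {} then 2 else (0::nat))"]) (simp_all add: T14_def good3_def)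

lemma base14_v10: "colorable {e \<in> tri ` set T14. 10 \<notin> e}"
  by (rule explicit_vc[where f="(\<lambda>j::nat. if j \<in> {2,3,6,7,11,13} then 1 else if j \<in> {} then 2 else (0::nat))"]) (simp_all add: T14_def good3_def)

lemma base14_v11: "colorable {e \<in> tri ` set T14. 11 \<notin> e}"
  by (rule explicit_vc[where f="(\<lambda>j::nat. if j \<in> {2,3,6,7,10,13} then 1 else if j \<in> {} then 2 else (0::nat))"]) (simp_all add: T14_def good3_def)

lemma base14_v12: "colorable {e \<in> tri ` set T14. 12 \<notin> e}"
  by (rule explicit_vc[where f="(\<lambda>j::nat. if j \<in> {2,3,6,7,10,11} then 1 else if j \<in> {} then 2 else (0::nat))"]) (simp_all add: T14_def good3_def)

lemma base14_v13: "colorable {e \<in> tri ` set T14. 13 \<notin> e}"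
  by (rule explicit_vc[where f="(\<lambda>j::nat. if j \<in> {2,3,6,7,10,11} then 1 else if j \<in> {} then 2 else (0::nat))"]) (simp_all add: T14_def good3_def)

lemma base14_vc: assumes "v < 14" shows "colorable {e \<in> tri ` set T14. v \<notin> e}"
proof -
  have "v = 0 \<or> v = 1 \<or> v = 2 \<or> v = 3 \<or> v = 4 \<or> v = 5 \<or> v = 6 \<or> v = 7 \<or> v = 8 \<or> v = 9 \<or> v = 10 \<or> v = 11 \<or> v = 12 \<or> v = 13" using assms by presburger
  then show ?thesis using base14_v0 base14_v1 base14_v2 base14_v3 base14_v4 base14_v5 base14_v6 base14_v7 base14_v8 base14_v9 base14_v10 base14_v11 base14_v12 base14_v13 by (elim disjE) blast+
qed

lemma base14: "good_family 14 (tri ` set T14) \<and> card (tri ` set T14) \<le> 26"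
proof -
  have "good_family 14 (tri ` set T14) \<and> card (tri ` set T14) \<le> length T14"
    by (rule explicit_base[OF _ _ base14_unc base14_vc]) (simp_all add: T14_def)
  then show ?thesis by (simp add: T14_def)
qed

lemma family_gen:
  assumes n: "13 \<le> n \<and> odd n \<or> 16 \<le> n \<and> even n"
  shows "good_family n (EE n) \<and> real (card (EE n)) \<le> 7 * real n / 3 - 4"
proof -
  have n9: "9 \<le> n" using n by auto
  have fin: "finite (EE n)" unfolding EE_def using CE_finite by auto
  have edges: "e \<subseteq> {..<n} \<and> card e = 3" if "e \<in> EE n" for e
  proof -
    have "e \<in> CE n \<or> e = {0,4,8}" using that unfolding EE_def by (auto split: if_splits)
    then show ?thesis
    proof
      assume "e \<in> CE n" then show ?thesis using CE_edges n9 by auto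
    next
      assume "e = {0,4,8}" then show ?thesis using n9 by auto
    qed
  qed
  have gf: "good_family n (EE n)"
    unfolding good_family_def using fin edges EE_uncol[OF n9] EE_vc[OF n9] n by auto
  have cn: "card (EE n) \<le> 2 * n + (if odd n then 0 else 1)"
  proof (cases "odd n")
    case True then show ?thesis using CE_card[of n] unfolding EE_def by simp
  next
    case False
    have "card (insert {0,4,8} (CE n)) \<le> Suc (card (CE n))"
      using CE_finite[of n] by (simp add: card_insert_if)
    then show ?thesis using False CE_card[of n] unfolding EE_def by simp
  qed
  have c: "real (card (EE n)) \<le> 2 * real n + (if odd n then 0 else 1)"
  proof (cases "odd n")
    case True then have "card (EE n) \<le> 2*n" using cn by simp
    then have "real (card (EE n)) \<le> real (2*n)" by (simp only: of_nat_le_iff)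
    then show ?thesis using True by simp
  next
    case False then have "card (EE n) \<le> 2*n+1" using cn by simp
    then have "real (card (EE n)) \<le> real (2*n+1)" by (simp only: of_nat_le_iff)
    then show ?thesis using False by simp
  qed
  have "2 * real n + (if odd n then 0 else 1) \<le> 7 * real n / 3 - 4"
  proof (cases "odd n")
    case True then have "13 \<le> real n" using n by auto
    then show ?thesis using True by simp
  next
    case False then have "16 \<le> real n" using n by auto
    then show ?thesis using False by simp
  qed
  then show ?thesis using gf c by linarith
qed

lemma exists_family:
  assumes "6 \<le> n"
  shows "\<exists>E. good_family n E \<and> real (card E) \<le> 7 * real n / 3 - 4"
proof -
  have "n = 6 \<or> n = 7 \<or> n = 8 \<or> n = 9 \<or> n = 10 \<or> n = 11 \<or> n = 12 \<or> n = 14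
    \<or> (13 \<le> n \<and> odd n \<or> 16 \<le> n \<and> even n)"
    using assms by presburger
  then consider "n = 6" | "n = 7" | "n = 8" | "n = 9" | "n = 10" | "n = 11" | "n = 12" | "n = 14"
    | "13 \<le> n \<and> odd n \<or> 16 \<le> n \<and> even n" by blast
  then show ?thesis
  proof cases
    case 1 then show ?thesis using base6 by (intro exI[of _ "tri ` set T6"]) force
  next
    case 2 then show ?thesis using base7 by (intro exI[of _ "tri ` set T7"]) force
  next
    case 3 then show ?thesis using base8 by (intro exI[of _ "tri ` set T8"]) force
  next
    case 4 then show ?thesis using base9 by (intro exI[of _ "tri ` set T9"]) force
  next
    case 5 then show ?thesis using base10 by (intro exI[of _ "tri ` set T10"]) force
  next
    case 6 then show ?thesis using base11 by (intro exI[of _ "tri ` set T11"]) force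
  next
    case 7 then show ?thesis using base12 by (intro exI[of _ "tri ` set T12"]) force
  next
    case 8 then show ?thesis using base14 by (intro exI[of _ "tri ` set T14"]) force
  next
    case 9 then show ?thesis using family_gen by blast
  qed
qed

theorem theorem1p3:
  fixes n :: nat
  assumes "n \<ge> 6"
  shows "MUC n 3 \<noteq> {} \<and> ell n 3 \<noteq> \<infinity> \<and>
         real (the_enat (ell n 3)) \<le> 7 * real n / 3 - 4"
proof -
  obtain E where E: "good_family n E" "real (card E) \<le> 7 * real n / 3 - 4"
    using exists_family[OF assms] by blast
  obtain E' where E': "({..<n}, E') \<in> MUC n 3" "card E' \<le> card E"
    using exists_muc[of E n] E(1) unfolding good_family_def by blast
  have l: "MUC n 3 \<noteq> {} \<and> ell n 3 \<noteq> \<infinity> \<and> the_enat (ell n 3) \<le> card E'"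
    by (rule ell_bound[OF E'(1)])
  then have "real (the_enat (ell n 3)) \<le> real (card E)" using E'(2) by linarith
  then show ?thesis using l E(2) by linarith
qed

end
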